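(* Let $n\ge2$, let $a=(a_1,\dots,a_n)$ and $b=(b_1,\dots,b_n)$ be real sequences, and let $t=(t_1,\dots,t_n)\in T_a\cap T_b$. Let $p=(p_1,\dots,p_n)\in[0,\infty)^n$ with at least two $p_i$ positive (so that $S_{n,p}(t,t)>0$). Then $$S_{n,p}(a,b)\ge \frac{S_{n,p}(a,t)\,S_{n,p}(b,t)}{S_{n,p}(t,t)}.$$
   Context: For a real sequence $(x_i)$, $\Delta x_i=x_{i+1}-x_i$. "Increasing" means strictly increasing. For a real sequence $a=(a_i)_{i=1}^n$, $T_a$ denotes the set of increasing real sequences $(t_i)_{i=1}^n$ such that $(\Delta a_i/\Delta t_i)_{i=1}^{n-1}$ is non-decreasing. For $p\in[0,\infty)^n$ with $P_n=\sum_{i=1}^n p_i>0$ and $x,y\in\mathbb{R}^n$: $M_{n,p}(x)=\frac1{P_n}\sum_{i=1}^n p_ix_i$, $xy=(x_1y_1,\dots,x_ny_n)$, and $S_{n,p}(x,y)=M_{n,p}(xy)-M_{n,p}(x)M_{n,p}(y)$. *)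

theory Defs
  imports Complex_Main
begin

(* Sequences x = (x_1,...,x_n) are represented as functions nat => real; only
   indices 1..n matter. Delta x_i = x (i+1) - x i. *)

definition fdiff :: "(nat \<Rightarrow> real) \<Rightarrow> nat \<Rightarrow> real" where
  "fdiff x i = x (Suc i) - x i"

definition increasing_seq :: "nat \<Rightarrow> (nat \<Rightarrow> real) \<Rightarrow> bool" where
  "increasing_seq n t \<longleftrightarrow> (\<forall>i. 1 \<le> i \<and> i < n \<longrightarrow> t i < t (Suc i))"

definition T_set :: "nat \<Rightarrow> (nat \<Rightarrow> real) \<Rightarrow> (nat \<Rightarrow> real) set" where
  "T_set n a = {t. increasing_seq n t \<and>
     (\<forall>i j. 1 \<le> i \<and> i \<le> j \<and> j \<le> n - 1 \<longrightarrow>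
        fdiff a i / fdiff t i \<le> fdiff a j / fdiff t j)}"

definition M :: "nat \<Rightarrow> (nat \<Rightarrow> real) \<Rightarrow> (nat \<Rightarrow> real) \<Rightarrow> real" where
  "M n p x = (\<Sum>i=1..n. p i * x i) / (\<Sum>i=1..n. p i)"

definition S :: "nat \<Rightarrow> (nat \<Rightarrow> real) \<Rightarrow> (nat \<Rightarrow> real) \<Rightarrow> (nat \<Rightarrow> real) \<Rightarrow> real" where
  "S n p x y = M n p (\<lambda>i. x i * y i) - M n p x * M n p y"

end

theory Submission
  imports Defs
begin

definition conv3 :: "nat \<Rightarrow> (nat\<Rightarrow>real) \<Rightarrow> (nat\<Rightarrow>real) \<Rightarrow> bool" where
  "conv3 n t d \<longleftrightarrow> (\<forall>i j k. 1 \<le> i \<and> i < j \<and> j < k \<and> k \<le> n \<longrightarrow>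
      (d j - d i) * (t k - t j) \<le> (d k - d j) * (t j - t i))"

lemma M_lin: "M n p (\<lambda>i. x i - l * y i) = M n p x - l * M n p y"
  unfolding M_def
  by (simp add: right_diff_distrib sum_subtractf sum_distrib_left mult.left_commute diff_divide_distrib)

lemma S_lin: "S n p (\<lambda>i. x i - l * y i) z = S n p x z - l * S n p y z"
proof -
  have e: "(\<lambda>i. (x i - l * y i) * z i) = (\<lambda>i. x i * z i - l * (y i * z i))"
    by (auto simp: algebra_simps)
  show ?thesis unfolding S_def M_lin e by (simp add: algebra_simps)
qed

lemma S_sym: "S n p x y = S n p y x"
  unfolding S_def by (simp add: mult.commute)

lemma sum_centered0:
  assumes "(\<Sum>i=1..n. p i) \<noteq> 0"
  shows "(\<Sum>i=1..n. p i * (x i - M n p x)) = 0"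
proof -
  have "(\<Sum>i=1..n. p i * (x i - M n p x)) = (\<Sum>i=1..n. p i * x i) - M n p x * (\<Sum>i=1..n. p i)"
    by (simp add: right_diff_distrib sum_subtractf sum_distrib_left mult.commute)
  also have "\<dots> = 0" using assms unfolding M_def by simp
  finally show ?thesis .
qed

lemma S_centered:
  assumes "(\<Sum>i=1..n. p i) \<noteq> 0"
  shows "S n p x y = (\<Sum>i=1..n. p i * (x i - M n p x) * y i) / (\<Sum>i=1..n. p i)"
proof -
  have "(\<Sum>i=1..n. p i * (x i - M n p x) * y i) = (\<Sum>i=1..n. p i * (x i * y i)) - M n p x * (\<Sum>i=1..n. p i * y i)"
  proof -
    have "(\<Sum>i=1..n. p i * (x i - M n p x) * y i) = (\<Sum>i=1..n. p i * (x i * y i) - M n p x * (p i * y i))"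
      by (rule sum.cong) (auto simp: algebra_simps)
    thus ?thesis by (simp add: sum_subtractf sum_distrib_left)
  qed
  thus ?thesis using assms unfolding S_def M_def by (simp add: diff_divide_distrib)
qed

lemma S_centered2:
  assumes "(\<Sum>i=1..n. p i) \<noteq> 0"
  shows "S n p x y = (\<Sum>i=1..n. p i * (x i - M n p x) * (y i - M n p y)) / (\<Sum>i=1..n. p i)"
proof -
  have "(\<Sum>i=1..n. p i * (x i - M n p x) * (y i - M n p y)) =
      (\<Sum>i=1..n. p i * (x i - M n p x) * y i) - M n p y * (\<Sum>i=1..n. p i * (x i - M n p x))"
  proof -
    have "(\<Sum>i=1..n. p i * (x i - M n p x) * (y i - M n p y)) =
      (\<Sum>i=1..n. p i * (x i - M n p x) * y i - M n p y * (p i * (x i - M n p x)))"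
      by (rule sum.cong) (auto simp: algebra_simps)
    thus ?thesis by (simp add: sum_subtractf sum_distrib_left)
  qed
  thus ?thesis using S_centered[OF assms] sum_centered0[OF assms] by simp
qed

lemma tele_le:
  assumes "i \<le> j" "\<forall>m. i \<le> m \<and> m < j \<longrightarrow> fdiff d m \<le> \<sigma> * fdiff t m"
  shows "d j - d i \<le> \<sigma> * (t j - t i)"
  using assms
proof (induction j rule: dec_induct)
  case base then show ?case by simp
next
  case (step m)
  have "fdiff d m \<le> \<sigma> * fdiff t m" using step by auto
  with step show ?case by (auto simp: fdiff_def algebra_simps)
qed

lemma tele_ge:
  assumes "i \<le> j" "\<forall>m. i \<le> m \<and> m < j \<longrightarrow> fdiff d m \<ge> \<sigma> * fdiff t m"
  shows "d j - d i \<ge> \<sigma> * (t j - t i)"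
  using assms
proof (induction j rule: dec_induct)
  case base then show ?case by simp
next
  case (step m)
  have "fdiff d m \<ge> \<sigma> * fdiff t m" using step by auto
  with step show ?case by (auto simp: fdiff_def algebra_simps)
qed

lemma T_conv3:
  assumes "t \<in> T_set n d"
  shows "conv3 n t d"
  unfolding conv3_def
proof (intro allI impI)
  fix i j k assume h: "1 \<le> i \<and> i < j \<and> j < k \<and> k \<le> n"
  define \<epsilon> where "\<epsilon> m = fdiff d m / fdiff t m" for m
  have inc: "increasing_seq n t" and sl: "\<And>i j. 1 \<le> i \<Longrightarrow> i \<le> j \<Longrightarrow> j \<le> n - 1 \<Longrightarrow> \<epsilon> i \<le> \<epsilon> j"
    using assms unfolding T_set_def \<epsilon>_def by auto
  have pos: "\<And>m. 1 \<le> m \<Longrightarrow> m < n \<Longrightarrow> fdiff t m > 0"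
    using inc unfolding increasing_seq_def fdiff_def by auto
  have eq: "\<And>m. 1 \<le> m \<Longrightarrow> m < n \<Longrightarrow> fdiff d m = \<epsilon> m * fdiff t m"
    using pos unfolding \<epsilon>_def by (metis less_irrefl nonzero_divide_eq_eq)
  have h1: "d j - d i \<le> \<epsilon> (j-1) * (t j - t i)"
  proof (rule tele_le)
    show "i \<le> j" using h by simp
    show "\<forall>m. i \<le> m \<and> m < j \<longrightarrow> fdiff d m \<le> \<epsilon> (j - 1) * fdiff t m"
    proof (intro allI impI)
      fix m assume "i \<le> m \<and> m < j"
      hence "1 \<le> m" "m < n" "\<epsilon> m \<le> \<epsilon> (j-1)" using h sl[of m "j-1"] by auto
      thus "fdiff d m \<le> \<epsilon> (j - 1) * fdiff t m"
        using eq pos[of m] by (simp add: mult_right_mono)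
    qed
  qed
  have h2: "d k - d j \<ge> \<epsilon> j * (t k - t j)"
  proof (rule tele_ge)
    show "j \<le> k" using h by simp
    show "\<forall>m. j \<le> m \<and> m < k \<longrightarrow> fdiff d m \<ge> \<epsilon> j * fdiff t m"
    proof (intro allI impI)
      fix m assume "j \<le> m \<and> m < k"
      hence "1 \<le> m" "m < n" "\<epsilon> j \<le> \<epsilon> m" using h sl[of j m] by auto
      thus "fdiff d m \<ge> \<epsilon> j * fdiff t m"
        using eq pos[of m] by (simp add: mult_right_mono)
    qed
  qed
  have h3: "\<epsilon> (j-1) \<le> \<epsilon> j" using h sl[of "j-1" j] by auto
  have tij: "t j - t i \<ge> 0"
  proof -
    have "\<forall>m. i \<le> m \<and> m < j \<longrightarrow> 0 * fdiff t m \<le> fdiff t m"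
      using h by (auto intro: less_imp_le[OF pos])
    hence "0 * (t j - t i) \<le> t j - t i" using tele_ge[where i=i and j=j and d=t and \<sigma>=0 and t=t] h by auto
    thus ?thesis by simp
  qed
  have tjk: "t k - t j \<ge> 0"
  proof -
    have "\<forall>m. j \<le> m \<and> m < k \<longrightarrow> 0 * fdiff t m \<le> fdiff t m"
      using h by (auto intro: less_imp_le[OF pos])
    hence "0 * (t k - t j) \<le> t k - t j" using tele_ge[where i=j and j=k and d=t and \<sigma>=0 and t=t] h by auto
    thus ?thesis by simp
  qed
  have "(d j - d i) * (t k - t j) \<le> (\<epsilon> (j-1) * (t j - t i)) * (t k - t j)"
    using h1 tjk by (rule mult_right_mono)
  also have "\<dots> \<le> (\<epsilon> j * (t j - t i)) * (t k - t j)"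
    using h3 tij tjk by (intro mult_right_mono) auto
  also have "\<dots> = (\<epsilon> j * (t k - t j)) * (t j - t i)" by simp
  also have "\<dots> \<le> (d k - d j) * (t j - t i)"
    using h2 tij by (rule mult_right_mono)
  finally show "(d j - d i) * (t k - t j) \<le> (d k - d j) * (t j - t i)" .
qed

lemma conv3_lin:
  assumes "conv3 n t a"
  shows "conv3 n t (\<lambda>i. a i - l * t i)"
  unfolding conv3_def
proof (intro allI impI)
  fix i j k assume h: "1 \<le> i \<and> i < j \<and> j < k \<and> k \<le> n"
  hence H: "(a j - a i) * (t k - t j) \<le> (a k - a j) * (t j - t i)" using assms unfolding conv3_def by blast
  have "((a j - l * t j) - (a i - l * t i)) * (t k - t j) - ((a k - l * t k) - (a j - l * t j)) * (t j - t i)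
     = (a j - a i) * (t k - t j) - (a k - a j) * (t j - t i)" by (simp add: algebra_simps)
  with H show "(a j - l * t j - (a i - l * t i)) * (t k - t j) \<le> (a k - l * t k - (a j - l * t j)) * (t j - t i)"
    by linarith
qed

lemma chord:
  assumes cv: "conv3 n t d" and tm: "\<forall>i j. 1 \<le> i \<and> i < j \<and> j \<le> n \<longrightarrow> t i < t j"
    and rs: "1 \<le> r" "r < s" "s \<le> n" and i: "1 \<le> i" "i \<le> n"
  defines "\<sigma> \<equiv> (d s - d r) / (t s - t r)"
  shows "r \<le> i \<Longrightarrow> i \<le> s \<Longrightarrow> d i \<le> d r + \<sigma> * (t i - t r)"
    and "i \<le> r \<or> s \<le> i \<Longrightarrow> d i \<ge> d r + \<sigma> * (t i - t r)"
proof -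
  have D: "t s - t r > 0" using tm rs by auto
  have sD: "\<sigma> * (t s - t r) = d s - d r" unfolding \<sigma>_def using D by simp
  {
    assume a: "r \<le> i" "i \<le> s"
    show "d i \<le> d r + \<sigma> * (t i - t r)"
    proof (cases "i = r \<or> i = s")
      case True then show ?thesis using sD by auto
    next
      case False
      hence "r < i" "i < s" using a by auto
      hence C: "(d i - d r) * (t s - t i) \<le> (d s - d i) * (t i - t r)"
        using cv rs unfolding conv3_def by blast
      have "(d i - d r) * (t s - t r) \<le> (d s - d r) * (t i - t r)"
        using C by (simp add: algebra_simps)
      also have "\<dots> = (\<sigma> * (t i - t r)) * (t s - t r)" by (simp only: sD[symmetric]) (simp add: algebra_simps)
      finally have "(d i - d r) \<le> \<sigma> * (t i - t r)" using D by simp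
      thus ?thesis by simp
    qed
  }
  {
    assume a: "i \<le> r \<or> s \<le> i"
    show "d i \<ge> d r + \<sigma> * (t i - t r)"
    proof (cases "i = r \<or> i = s")
      case True then show ?thesis using sD by auto
    next
      case False
      hence "i < r \<or> s < i" using a by auto
      then show ?thesis
      proof
        assume "i < r"
        hence C: "(d r - d i) * (t s - t r) \<le> (d s - d r) * (t r - t i)"
          using cv rs i unfolding conv3_def by blast
        also have "\<dots> = (\<sigma> * (t r - t i)) * (t s - t r)" by (simp only: sD[symmetric]) (simp add: algebra_simps)
        finally have "(d r - d i) \<le> \<sigma> * (t r - t i)" using D by simp
        thus ?thesis by (simp add: algebra_simps)
      next
        assume "s < i"
        hence C: "(d s - d r) * (t i - t s) \<le> (d i - d s) * (t s - t r)"
          using cv rs i unfolding conv3_def by blast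
        have "(\<sigma> * (t i - t s)) * (t s - t r) = (d s - d r) * (t i - t s)" by (simp only: sD[symmetric]) (simp add: algebra_simps)
        also note C
        finally have "\<sigma> * (t i - t s) \<le> d i - d s" using D by simp
        moreover have "\<sigma>*(t i - t r) = \<sigma>*(t i - t s) + \<sigma>*(t s - t r)" by (simp add: algebra_simps)
        ultimately show ?thesis using sD by linarith
      qed
    qed
  }
qed


lemma key:
  assumes P: "(\<Sum>i=1..n. p i) > 0" and pnn: "\<forall>i\<in>{1..n}. p i \<ge> 0" and n2: "n \<ge> 2"
    and tm: "\<forall>i j. 1 \<le> i \<and> i < j \<and> j \<le> n \<longrightarrow> t i < t j"
    and cc: "conv3 n t c" and cb: "conv3 n t b" and Sct: "S n p c t = 0"
  shows "S n p c b \<ge> 0"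
proof -
  define m where "m = M n p c"
  have P0: "(\<Sum>i=1..n. p i) \<noteq> 0" using P by simp
  have w0: "(\<Sum>i=1..n. p i * (c i - m)) = 0" using sum_centered0[OF P0] unfolding m_def .
  have wt: "(\<Sum>i=1..n. p i * (c i - m) * t i) = 0"
    using S_centered[OF P0, of c t] Sct P0 unfolding m_def by simp
  have wb: "S n p c b = (\<Sum>i=1..n. p i * (c i - m) * b i) / (\<Sum>i=1..n. p i)"
    using S_centered[OF P0, of c b] unfolding m_def .
  have ex: "\<exists>\<alpha> \<beta>. \<forall>i\<in>{1..n}. (c i - m) * (b i - \<alpha> - \<beta> * t i) \<ge> 0"
  proof -
    define N where "N = {i\<in>{1..n}. c i < m}"
    have finN: "finite N" unfolding N_def by simp
    show ?thesis
    proof (cases "N = {}")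
      case True
      define \<alpha> where "\<alpha> = Min (b ` {1..n})"
      have "\<forall>i\<in>{1..n}. (c i - m) * (b i - \<alpha> - 0 * t i) \<ge> 0"
      proof
        fix i assume i: "i \<in> {1..n}"
        have "c i \<ge> m" using True i unfolding N_def by auto
        moreover have "b i \<ge> \<alpha>" unfolding \<alpha>_def using i by (intro Min_le) auto
        ultimately show "(c i - m) * (b i - \<alpha> - 0 * t i) \<ge> 0" by simp
      qed
      thus ?thesis by blast
    next
      case False
      define r where "r = Min N"
      define s where "s = Max N"
      have rN: "r \<in> N" unfolding r_def using False finN by simp
      have sN: "s \<in> N" unfolding s_def using False finN by simp
      have rle: "\<And>i. i \<in> N \<Longrightarrow> r \<le> i" unfolding r_def using finN by simp
      have sge: "\<And>i. i \<in> N \<Longrightarrow> i \<le> s" unfolding s_def using finN by simp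
      have r1: "1 \<le> r" "r \<le> n" and s1: "1 \<le> s" "s \<le> n" using rN sN unfolding N_def by auto
      have interval: "\<And>i. r \<le> i \<Longrightarrow> i \<le> s \<Longrightarrow> i \<in> N"
      proof -
        fix i assume a: "r \<le> i" "i \<le> s"
        show "i \<in> N"
        proof (cases "i = r \<or> i = s")
          case True then show ?thesis using rN sN by auto
        next
          case False
          hence lt: "r < i" "i < s" using a by auto
          have C: "(c i - c r) * (t s - t i) \<le> (c s - c i) * (t i - t r)"
            using cc lt r1 s1 unfolding conv3_def by blast
          show ?thesis
          proof (rule ccontr)
            assume "i \<notin> N"
            hence "c i \<ge> m" using lt r1 s1 unfolding N_def by auto
            moreover have "c r < m" "c s < m" using rN sN unfolding N_def by auto
            moreover have "t s - t i > 0" "t i - t r > 0" using tm lt r1 s1 by auto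
            ultimately have "(c i - c r) * (t s - t i) > 0" "(c s - c i) * (t i - t r) < 0"
              by (auto intro: mult_pos_pos mult_neg_pos)
            with C show False by linarith
          qed
        qed
      qed
      obtain r0 s0 where rs0: "1 \<le> r0" "r0 < s0" "s0 \<le> n" and sub: "N \<subseteq> {r0..s0}"
        and ends: "\<forall>i\<in>{r0..s0}. i \<notin> N \<longrightarrow> i = r0 \<or> i = s0"
      proof (cases "r < s")
        case True
        show ?thesis
        proof (rule that[of r s])
          show "N \<subseteq> {r..s}" using rle sge by auto
          show "\<forall>i\<in>{r..s}. i \<notin> N \<longrightarrow> i = r \<or> i = s" using interval by auto
        qed (use True r1 s1 in auto)
      next
        case False
        hence rs: "r = s" using rN rle sge by (metis le_antisym not_less)
        hence Nr: "N = {r}" using rle sge rN by fastforce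
        show ?thesis
        proof (cases "r < n")
          case True
          show ?thesis by (rule that[of r "Suc r"]) (use True r1 Nr in auto)
        next
          case False
          show ?thesis by (rule that[of "r - 1" r]) (use False r1 Nr n2 in auto)
        qed
      qed
      define \<sigma> where "\<sigma> = (b s0 - b r0) / (t s0 - t r0)"
      have "\<forall>i\<in>{1..n}. (c i - m) * (b i - (b r0 - \<sigma> * t r0) - \<sigma> * t i) \<ge> 0"
      proof
        fix i assume i: "i \<in> {1..n}"
        have e: "b i - (b r0 - \<sigma> * t r0) - \<sigma> * t i = b i - (b r0 + \<sigma> * (t i - t r0))"
          by (simp add: algebra_simps)
        show "(c i - m) * (b i - (b r0 - \<sigma> * t r0) - \<sigma> * t i) \<ge> 0"
        proof (cases "c i < m")
          case True
          hence "i \<in> N" using i unfolding N_def by auto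
          hence "r0 \<le> i" "i \<le> s0" using sub by auto
          hence "b i \<le> b r0 + \<sigma> * (t i - t r0)"
            using chord(1)[OF cb tm rs0, of i] i unfolding \<sigma>_def by auto
          thus ?thesis unfolding e using True by (intro mult_nonpos_nonpos) auto
        next
          case False
          hence "i \<notin> N" unfolding N_def by auto
          hence "i \<le> r0 \<or> s0 \<le> i" using ends by force
          hence "b i \<ge> b r0 + \<sigma> * (t i - t r0)"
            using chord(2)[OF cb tm rs0, of i] i unfolding \<sigma>_def by auto
          thus ?thesis unfolding e using False by (intro mult_nonneg_nonneg) auto
        qed
      qed
      thus ?thesis by blast
    qed
  qed
  then obtain \<alpha> \<beta> where ab: "\<forall>i\<in>{1..n}. (c i - m) * (b i - \<alpha> - \<beta> * t i) \<ge> 0" by blast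
  have "(\<Sum>i=1..n. p i * ((c i - m) * (b i - \<alpha> - \<beta> * t i))) =
     (\<Sum>i=1..n. p i * (c i - m) * b i - \<alpha> * (p i * (c i - m)) - \<beta> * (p i * (c i - m) * t i))"
    by (rule sum.cong) (auto simp: algebra_simps)
  also have "\<dots> = (\<Sum>i=1..n. p i * (c i - m) * b i)"
    using w0 wt by (simp add: sum_subtractf sum_distrib_left[symmetric])
  finally have eqs: "(\<Sum>i=1..n. p i * ((c i - m) * (b i - \<alpha> - \<beta> * t i))) = (\<Sum>i=1..n. p i * (c i - m) * b i)" .
  have "(\<Sum>i=1..n. p i * ((c i - m) * (b i - \<alpha> - \<beta> * t i))) \<ge> 0"
  proof (rule sum_nonneg)
    fix x assume x: "x \<in> {1..n}"
    show "0 \<le> p x * ((c x - m) * (b x - \<alpha> - \<beta> * t x))"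
      using mult_nonneg_nonneg[OF bspec[OF pnn x] bspec[OF ab x]] .
  qed
  hence "(\<Sum>i=1..n. p i * (c i - m) * b i) \<ge> 0" using eqs by simp
  thus ?thesis unfolding wb using P by simp
qed

theorem theorem4p1:
  fixes n :: nat and a b t p :: "nat \<Rightarrow> real"
  assumes "n \<ge> 2"
    and "t \<in> T_set n a" and "t \<in> T_set n b"
    and "\<forall>i\<in>{1..n}. p i \<ge> 0"
    and "\<exists>i\<in>{1..n}. \<exists>j\<in>{1..n}. i \<noteq> j \<and> p i > 0 \<and> p j > 0"
  shows "S n p a b \<ge> S n p a t * S n p b t / S n p t t"
proof -
  obtain i j where ij: "i \<in> {1..n}" "j \<in> {1..n}" "i \<noteq> j" "p i > 0" "p j > 0" using assms(5) by blast
  have P: "(\<Sum>i=1..n. p i) > 0"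
  proof -
    have "p i \<le> (\<Sum>i=1..n. p i)" using ij assms(4) by (intro member_le_sum) auto
    thus ?thesis using ij by linarith
  qed
  have inc: "increasing_seq n t" using assms(2) unfolding T_set_def by auto
  have tm: "\<forall>i j. 1 \<le> i \<and> i < j \<and> j \<le> n \<longrightarrow> t i < t j"
  proof (intro allI impI)
    fix i j assume h: "1 \<le> i \<and> i < j \<and> j \<le> n"
    have "i < j" "1 \<le> i" "j \<le> n" using h by auto
    thus "t i < t j"
    proof (induction j rule: less_induct)
      case (less j)
      show ?case
      proof (cases "i = j - 1")
        case True then show ?thesis using inc less.prems unfolding increasing_seq_def
          by (metis Suc_diff_1 diff_less le_less_trans less_one not_less zero_less_one Suc_le_eq)
      next
        case False
        hence "i < j - 1" using less.prems by auto
        hence "t i < t (j - 1)" using less.IH less.prems by auto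
        moreover have "t (j-1) < t (Suc (j-1))"
          by (rule inc[unfolded increasing_seq_def, rule_format]) (use less.prems \<open>i < j - 1\<close> in auto)
        moreover have "Suc (j-1) = j" using less.prems by auto
        ultimately show ?thesis by (metis order.strict_trans)
      qed
    qed
  qed
  have P0: "(\<Sum>i=1..n. p i) \<noteq> 0" using P by simp
  define mt where "mt = M n p t"
  have Stt: "S n p t t > 0"
  proof -
    have eq: "S n p t t = (\<Sum>i=1..n. p i * (t i - mt)^2) / (\<Sum>i=1..n. p i)"
      using S_centered2[OF P0, of t t] unfolding mt_def by (simp add: power2_eq_square mult.assoc)
    have tne: "t i \<noteq> t j" using tm ij by (metis atLeastAtMost_iff less_irrefl nat_neq_iff)
    have pos: "p i * (t i - mt)^2 + p j * (t j - mt)^2 > 0"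
    proof (cases "t i = mt")
      case True
      hence "t j \<noteq> mt" using tne by auto
      hence "p j * (t j - mt)^2 > 0" using ij by simp
      moreover have "p i * (t i - mt)^2 \<ge> 0" using ij by simp
      ultimately show ?thesis by linarith
    next
      case False
      hence "p i * (t i - mt)^2 > 0" using ij by simp
      moreover have "p j * (t j - mt)^2 \<ge> 0" using ij by simp
      ultimately show ?thesis by linarith
    qed
    have "(\<Sum>k\<in>{i,j}. p k * (t k - mt)^2) \<le> (\<Sum>k=1..n. p k * (t k - mt)^2)"
      using ij assms(4) by (intro sum_mono2) auto
    hence "(\<Sum>k=1..n. p k * (t k - mt)^2) > 0" using pos ij by simp
    thus ?thesis unfolding eq using P by simp
  qed
  define l where "l = S n p a t / S n p t t"
  define c where "c = (\<lambda>i. a i - l * t i)"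
  have Sct: "S n p c t = 0" unfolding c_def S_lin l_def using Stt by simp
  have cc: "conv3 n t c" unfolding c_def by (rule conv3_lin) (rule T_conv3[OF assms(2)])
  have "S n p c b \<ge> 0" using key[OF P assms(4) assms(1) tm cc T_conv3[OF assms(3)] Sct] .
  hence "S n p a b - l * S n p b t \<ge> 0" unfolding c_def S_lin using S_sym[of n p t b] by simp
  thus ?thesis unfolding l_def by simp
qed

end
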